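(* Let $M\ge2$ and $\bar\sigma>0$. Observe $\mathbf y=\mathbf f+\boldsymbol\xi\in\mathbf R^n$, where $\xi_1,\dots,\xi_n$ are i.i.d., centered with variance $\sigma^2$, and satisfy, for all $\mathbf b\in\mathbf R^n$, all $n\times n$ real matrices $B$ and all $x>0$, \[\mathbb P\big(\boldsymbol\xi^T\mathbf b>\bar\sigma\|\mathbf b\|_2\sqrt{2x}\big)\le e^{-x},\qquad \mathbb P\big(\boldsymbol\xi^TB\boldsymbol\xi-\sigma^2\mathrm{Tr}B>2\sigma\bar\sigma\|B\|_F\sqrt x+2\bar\sigma^2\|B\|_{op}x\big)\le e^{-x}.\] For $j=1,\dots,M$ let $\hat{\boldsymbol\mu}_j=A_j\mathbf y+\mathbf b_j$ with deterministic $n\times n$ matrices with $\|A_j\|_{op}\le1$ and deterministic $\mathbf b_j\in\mathbf R^n$. Let $\hat{\boldsymbol\theta}_{\mathrm{pen}}\in\arg\min_{\boldsymbol\theta\in\Lambda^M}H_{\mathrm{pen}}(\boldsymbol\theta)$. Then for all $x>0$, with probability at least $1-2e^{-x}$, \[\|\hat{\boldsymbol\mu}_{\hat{\boldsymbol\theta}_{\mathrm{pen}}}-\mathbf f\|_2^2\le\min_{j=1,\dots,M}\|\hat{\boldsymbol\mu}_j-\mathbf f\|_2^2+46\bar\sigma^2(2\log M+x).\]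
   Context: $\|\cdot\|_F$ Frobenius norm, $\|\cdot\|_{op}$ operator norm. $\Lambda^M=\{\boldsymbol\theta\in\mathbf R^M:\sum_j\theta_j=1,\theta_j\ge0\}$. For $\boldsymbol\theta\in\Lambda^M$: $A_{\boldsymbol\theta}=\sum_j\theta_jA_j$, $\mathbf b_{\boldsymbol\theta}=\sum_j\theta_j\mathbf b_j$, $\hat{\boldsymbol\mu}_{\boldsymbol\theta}=A_{\boldsymbol\theta}\mathbf y+\mathbf b_{\boldsymbol\theta}$. $C_p(\boldsymbol\theta)=\|\hat{\boldsymbol\mu}_{\boldsymbol\theta}\|_2^2-2\mathbf y^T\hat{\boldsymbol\mu}_{\boldsymbol\theta}+2\sigma^2\mathrm{Tr}(A_{\boldsymbol\theta})$, $\mathrm{pen}(\boldsymbol\theta)=\sum_j\theta_j\|\hat{\boldsymbol\mu}_{\boldsymbol\theta}-\hat{\boldsymbol\mu}_j\|_2^2$, $H_{\mathrm{pen}}=C_p+\tfrac12\mathrm{pen}$. *)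

theory Defs
  imports "HOL-Analysis.Analysis" "HOL-Probability.Probability"
begin

definition frob_norm :: "real^'n^'n \<Rightarrow> real" where
  "frob_norm B = sqrt (\<Sum>i\<in>UNIV. \<Sum>j\<in>UNIV. (B $ i $ j)^2)"

definition op_norm :: "real^'n^'n \<Rightarrow> real" where
  "op_norm B = onorm (\<lambda>v. B *v v)"

definition simplexM :: "(real^'m) set" where
  "simplexM = {\<theta>. (\<forall>j. \<theta> $ j \<ge> 0) \<and> (\<Sum>j\<in>UNIV. \<theta> $ j) = 1}"

definition A_th :: "('m \<Rightarrow> real^'n^'n) \<Rightarrow> real^'m \<Rightarrow> real^'n^'n" where
  "A_th A \<theta> = (\<Sum>j\<in>UNIV. (\<theta> $ j) *\<^sub>R A j)"

definition b_th :: "('m \<Rightarrow> real^'n) \<Rightarrow> real^'m \<Rightarrow> real^'n" where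
  "b_th b \<theta> = (\<Sum>j\<in>UNIV. (\<theta> $ j) *\<^sub>R b j)"

definition mu_th :: "('m \<Rightarrow> real^'n^'n) \<Rightarrow> ('m \<Rightarrow> real^'n) \<Rightarrow> real^'n \<Rightarrow> real^'m \<Rightarrow> real^'n" where
  "mu_th A b y \<theta> = A_th A \<theta> *v y + b_th b \<theta>"

definition mu_j :: "('m \<Rightarrow> real^'n^'n) \<Rightarrow> ('m \<Rightarrow> real^'n) \<Rightarrow> real^'n \<Rightarrow> 'm \<Rightarrow> real^'n" where
  "mu_j A b y j = A j *v y + b j"

definition Cp :: "real \<Rightarrow> ('m \<Rightarrow> real^'n^'n) \<Rightarrow> ('m \<Rightarrow> real^'n) \<Rightarrow> real^'n \<Rightarrow> real^'m \<Rightarrow> real" where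
  "Cp \<sigma> A b y \<theta> = (norm (mu_th A b y \<theta>))^2 - 2 * (y \<bullet> mu_th A b y \<theta>)
      + 2 * \<sigma>^2 * trace (A_th A \<theta>)"

definition pen :: "('m \<Rightarrow> real^'n^'n) \<Rightarrow> ('m \<Rightarrow> real^'n) \<Rightarrow> real^'n \<Rightarrow> real^'m \<Rightarrow> real" where
  "pen A b y \<theta> = (\<Sum>j\<in>UNIV. (\<theta> $ j) * (norm (mu_th A b y \<theta> - mu_j A b y j))^2)"

definition H_pen :: "real \<Rightarrow> ('m \<Rightarrow> real^'n^'n) \<Rightarrow> ('m \<Rightarrow> real^'n) \<Rightarrow> real^'n \<Rightarrow> real^'m \<Rightarrow> real" where
  "H_pen \<sigma> A b y \<theta> = Cp \<sigma> A b y \<theta> + pen A b y \<theta> / 2"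

end

theory Submission
  imports Defs
begin

lemma G_nonneg:
  fixes G q :: real
  assumes q: "q \<ge> 0" and h: "\<And>s. 0 < s \<Longrightarrow> s \<le> 1 \<Longrightarrow> 0 \<le> s * G + s^2 / 2 * q"
  shows "G \<ge> 0"
proof (rule ccontr)
  assume "\<not> G \<ge> 0"
  hence G: "G < 0" by simp
  define s where "s = (-G) / (q - G)"
  have d: "q - G > 0" using G q by simp
  have s0: "0 < s" unfolding s_def using G d by (intro divide_pos_pos) auto
  have s1: "s \<le> 1" using G q d by (simp add: s_def field_simps)
  have "0 \<le> s * G + s^2 / 2 * q" using h s0 s1 by blast
  moreover have "s * G + s^2 / 2 * q = s * (G + s / 2 * q)" by (simp add: power2_eq_square algebra_simps)
  ultimately have "0 \<le> s * (G + s / 2 * q)" by simp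
  hence "0 \<le> G + s / 2 * q" using s0 by (simp add: zero_le_mult_iff)
  moreover have "s * q \<le> -G" using G q d by (simp add: s_def field_simps mult_left_mono)
  ultimately show False using G by linarith
qed

lemma var_id:
  fixes \<mu> :: "'m::finite \<Rightarrow> 'v::real_inner" and \<theta> :: "real^'m" and p :: 'v
  assumes "(\<Sum>j\<in>UNIV. \<theta> $ j) = 1"
  shows "(\<Sum>j\<in>UNIV. \<theta> $ j * (norm (p - \<mu> j))^2)
     = (norm (p - (\<Sum>j\<in>UNIV. \<theta> $ j *\<^sub>R \<mu> j)))^2 + (\<Sum>j\<in>UNIV. \<theta> $ j * (norm (\<mu> j))^2)
       - (norm (\<Sum>j\<in>UNIV. \<theta> $ j *\<^sub>R \<mu> j))^2"
proof -
  let ?m = "\<Sum>j\<in>UNIV. \<theta> $ j *\<^sub>R \<mu> j"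
  have e: "\<And>j. (norm (p - \<mu> j))^2 = (norm p)^2 - 2 * (p \<bullet> \<mu> j) + (norm (\<mu> j))^2"
    by (simp add: power2_norm_eq_inner inner_diff_left inner_diff_right inner_commute)
  have "(\<Sum>j\<in>UNIV. \<theta> $ j * (norm (p - \<mu> j))^2)
     = (\<Sum>j\<in>UNIV. \<theta> $ j) * (norm p)^2 - 2 * (\<Sum>j\<in>UNIV. \<theta> $ j * (p \<bullet> \<mu> j)) + (\<Sum>j\<in>UNIV. \<theta> $ j * (norm (\<mu> j))^2)"
    by (simp add: e algebra_simps sum.distrib sum_subtractf sum_distrib_left sum_distrib_right)
  also have "(\<Sum>j\<in>UNIV. \<theta> $ j * (p \<bullet> \<mu> j)) = p \<bullet> ?m"
    by (simp add: inner_sum_right)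
  finally show ?thesis using assms
    by (simp add: power2_norm_eq_inner inner_diff_left inner_diff_right inner_commute)
qed

lemma ax_comp: "(axis k (1::real) :: real^'m) $ j = (if j = k then 1 else 0)"
  by (simp add: axis_def)

lemma det:
  fixes \<mu> :: "'m::finite \<Rightarrow> 'v::real_inner" and \<tau> :: "'m \<Rightarrow> real" and \<theta>h :: "real^'m"
    and f \<xi> :: 'v and ss K :: real
  defines "mt \<equiv> \<lambda>\<theta>::real^'m. \<Sum>j\<in>UNIV. \<theta> $ j *\<^sub>R \<mu> j"
  defines "Hf \<equiv> \<lambda>\<theta>. (norm (mt \<theta>))^2 - 2 * ((f + \<xi>) \<bullet> mt \<theta>) + 2 * ss * (\<Sum>j\<in>UNIV. \<theta> $ j * \<tau> j)
                + (\<Sum>j\<in>UNIV. \<theta> $ j * (norm (mt \<theta> - \<mu> j))^2) / 2"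
  assumes th: "\<theta>h \<in> simplexM" and min: "\<forall>\<theta>\<in>simplexM. Hf \<theta>h \<le> Hf \<theta>"
    and hyp: "\<forall>j. (\<xi> \<bullet> \<mu> j - ss * \<tau> j) - (\<xi> \<bullet> \<mu> k - ss * \<tau> k) \<le> (norm (\<mu> j - \<mu> k))^2 / 4 + K"
  shows "(norm (mt \<theta>h - f))^2 \<le> (norm (\<mu> k - f))^2 + 2 * K"
proof -
  define h where "h j = (norm (\<mu> j))^2 / 2 - 2 * ((f + \<xi>) \<bullet> \<mu> j) + 2 * ss * \<tau> j" for j
  define L where "L \<theta> = (\<Sum>j\<in>UNIV. \<theta> $ j * h j)" for \<theta> :: "real^'m"
  have Hs: "Hf \<theta> = (norm (mt \<theta>))^2 / 2 + L \<theta>" if "\<theta> \<in> simplexM" for \<theta>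
  proof -
    have s1: "(\<Sum>j\<in>UNIV. \<theta> $ j) = 1" using that by (simp add: simplexM_def)
    have v: "(\<Sum>j\<in>UNIV. \<theta> $ j * (norm (mt \<theta> - \<mu> j))^2)
       = (\<Sum>j\<in>UNIV. \<theta> $ j * (norm (\<mu> j))^2) - (norm (mt \<theta>))^2"
      using var_id[OF s1, of "mt \<theta>" \<mu>] by (simp add: mt_def)
    have i: "(f + \<xi>) \<bullet> mt \<theta> = (\<Sum>j\<in>UNIV. \<theta> $ j * ((f + \<xi>) \<bullet> \<mu> j))"
      by (simp add: mt_def inner_sum_right)
    have dd: "(\<Sum>j\<in>UNIV. \<theta> $ j * (norm (\<mu> j))^2 / 2) = (\<Sum>j\<in>UNIV. \<theta> $ j * (norm (\<mu> j))^2) / 2"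
      by (simp add: sum_divide_distrib)
    have "Hf \<theta> = (norm (mt \<theta>))^2 / 2 + (\<Sum>j\<in>UNIV. \<theta> $ j * (norm (\<mu> j))^2 / 2)
       - 2 * (\<Sum>j\<in>UNIV. \<theta> $ j * ((f + \<xi>) \<bullet> \<mu> j)) + 2 * ss * (\<Sum>j\<in>UNIV. \<theta> $ j * \<tau> j)"
      unfolding Hf_def v i dd by (simp add: field_simps)
    also have "\<dots> = (norm (mt \<theta>))^2 / 2 + L \<theta>"
      unfolding L_def h_def
      by (simp add: algebra_simps sum.distrib sum_subtractf sum_distrib_left)
    finally show ?thesis .
  qed
  define m where "m = mt \<theta>h"
  define d where "d = \<mu> k - m"
  define G where "G = m \<bullet> d + h k - L \<theta>h"
  define q where "q = (norm d)^2"
  define \<theta>s where "\<theta>s s = (1 - s) *\<^sub>R \<theta>h + s *\<^sub>R (axis k 1 :: real^'m)" for s :: real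
  have ths: "\<theta>s s \<in> simplexM" if "0 \<le> s" "s \<le> 1" for s
  proof -
    have "\<forall>j. \<theta>h $ j \<ge> 0" "(\<Sum>j\<in>UNIV. \<theta>h $ j) = 1" using th by (auto simp: simplexM_def)
    then show ?thesis using that
      by (auto simp: simplexM_def \<theta>s_def ax_comp sum.distrib sum_distrib_left[symmetric])
  qed
  have mts: "mt (\<theta>s s) = m + s *\<^sub>R d" for s
  proof -
    have e1: "mt (\<theta>s s) = (\<Sum>j\<in>UNIV. ((1 - s) * \<theta>h $ j) *\<^sub>R \<mu> j) + (\<Sum>j\<in>UNIV. (s * (axis k 1 $ j)) *\<^sub>R \<mu> j)"
      by (simp add: mt_def \<theta>s_def scaleR_add_left sum.distrib)
    have e2: "\<And>j. (s * (axis k 1 $ j)) *\<^sub>R \<mu> j = (if j = k then s *\<^sub>R \<mu> k else 0)"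
      by (simp add: ax_comp)
    have e3: "(\<Sum>j\<in>UNIV. ((1 - s) * \<theta>h $ j) *\<^sub>R \<mu> j) = (1 - s) *\<^sub>R mt \<theta>h"
      by (simp add: mt_def scaleR_sum_right)
    have "mt (\<theta>s s) = (1 - s) *\<^sub>R mt \<theta>h + s *\<^sub>R \<mu> k"
      unfolding e1 e2 e3 by simp
    then show ?thesis by (simp add: m_def d_def algebra_simps)
  qed
  have Ls: "L (\<theta>s s) = L \<theta>h + s * (h k - L \<theta>h)" for s
  proof -
    have e1: "L (\<theta>s s) = (\<Sum>j\<in>UNIV. (1 - s) * (\<theta>h $ j * h j)) + (\<Sum>j\<in>UNIV. s * (axis k 1 $ j) * h j)"
      unfolding L_def \<theta>s_def sum.distrib[symmetric]
      by (rule sum.cong) (simp_all add: algebra_simps)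
    have e2: "\<And>j. s * (axis k 1 $ j) * h j = (if j = k then s * h k else 0)"
      by (simp add: ax_comp)
    have e3: "(\<Sum>j\<in>UNIV. (1 - s) * (\<theta>h $ j * h j)) = (1 - s) * L \<theta>h"
      by (simp add: L_def sum_distrib_left)
    show ?thesis unfolding e1 e2 e3 by (simp add: algebra_simps)
  qed
  have diff: "Hf (\<theta>s s) - Hf \<theta>h = s * G + s^2 / 2 * q" if "0 \<le> s" "s \<le> 1" for s
  proof -
    have "Hf (\<theta>s s) - Hf \<theta>h = (norm (m + s *\<^sub>R d))^2 / 2 + L \<theta>h + s * (h k - L \<theta>h) - ((norm m)^2/2 + L \<theta>h)"
      using Hs[OF ths[OF that]] Hs[OF th] mts Ls by (simp add: m_def)
    also have "\<dots> = s * G + s^2 / 2 * q"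
    proof -
      have "(norm (m + s *\<^sub>R d))^2 = (m + s *\<^sub>R d) \<bullet> (m + s *\<^sub>R d)" by (rule power2_norm_eq_inner)
      also have "\<dots> = m \<bullet> m + 2 * s * (m \<bullet> d) + s^2 * (d \<bullet> d)"
        by (simp add: inner_add_left inner_add_right inner_commute algebra_simps power2_eq_square)
      finally have "(norm (m + s *\<^sub>R d))^2 = (norm m)^2 + 2 * s * (m \<bullet> d) + s^2 * (norm d)^2"
        by (simp add: power2_norm_eq_inner)
      then show ?thesis by (simp add: G_def q_def algebra_simps)
    qed
    finally show ?thesis .
  qed
  have G0: "G \<ge> 0"
  proof (rule G_nonneg)
    show "q \<ge> 0" by (simp add: q_def)
    fix s :: real assume "0 < s" "s \<le> 1"
    then show "0 \<le> s * G + s^2 / 2 * q" using diff[of s] min ths[of s] by auto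
  qed
  have key: "(norm (\<mu> k))^2 / 2 + h k - ((norm m)^2 / 2 + L \<theta>h) = G + q / 2"
    unfolding G_def q_def d_def
    by (simp add: power2_norm_eq_inner inner_diff_left inner_diff_right algebra_simps inner_commute field_simps)
  have s1: "(\<Sum>j\<in>UNIV. \<theta>h $ j) = 1" and pos: "\<forall>j. \<theta>h $ j \<ge> 0" using th by (auto simp: simplexM_def)
  define S where "S = (\<Sum>j\<in>UNIV. \<theta>h $ j * (norm (\<mu> j))^2)"
  define T where "T = (\<Sum>j\<in>UNIV. \<theta>h $ j * \<tau> j)"
  have LS: "L \<theta>h = S / 2 - 2 * ((f + \<xi>) \<bullet> m) + 2 * ss * T"
    by (simp add: L_def h_def S_def T_def m_def mt_def inner_sum_right algebra_simps sum.distrib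
        sum_subtractf sum_distrib_left sum_divide_distrib)
  have hs: "(\<Sum>j\<in>UNIV. \<theta>h $ j * ((\<xi> \<bullet> \<mu> j - ss * \<tau> j) - (\<xi> \<bullet> \<mu> k - ss * \<tau> k)))
         \<le> (\<Sum>j\<in>UNIV. \<theta>h $ j * ((norm (\<mu> k - \<mu> j))^2 / 4 + K))"
    using hyp pos by (intro sum_mono mult_left_mono) (auto simp: norm_minus_commute)
  have lhs: "(\<Sum>j\<in>UNIV. \<theta>h $ j * ((\<xi> \<bullet> \<mu> j - ss * \<tau> j) - (\<xi> \<bullet> \<mu> k - ss * \<tau> k)))
      = \<xi> \<bullet> m - ss * T - (\<xi> \<bullet> \<mu> k - ss * \<tau> k)"
  proof -
    define c where "c = \<xi> \<bullet> \<mu> k - ss * \<tau> k"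
    have p: "\<And>j. \<theta>h $ j * ((\<xi> \<bullet> \<mu> j - ss * \<tau> j) - c) = \<theta>h $ j * (\<xi> \<bullet> \<mu> j) - ss * (\<theta>h $ j * \<tau> j) - c * \<theta>h $ j"
      by (simp add: algebra_simps)
    have q: "(\<Sum>j\<in>UNIV. \<theta>h $ j * (\<xi> \<bullet> \<mu> j) - ss * (\<theta>h $ j * \<tau> j) - c * \<theta>h $ j)
        = (\<Sum>j\<in>UNIV. \<theta>h $ j * (\<xi> \<bullet> \<mu> j)) - ss * T - c * (\<Sum>j\<in>UNIV. \<theta>h $ j)"
      by (simp add: sum_subtractf sum_distrib_left T_def)
    have r: "(\<Sum>j\<in>UNIV. \<theta>h $ j * (\<xi> \<bullet> \<mu> j)) = \<xi> \<bullet> m"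
      by (simp add: m_def mt_def inner_sum_right)
    show ?thesis unfolding c_def[symmetric] p q r s1 by simp
  qed
  have rhs: "(\<Sum>j\<in>UNIV. \<theta>h $ j * ((norm (\<mu> k - \<mu> j))^2 / 4 + K))
      = ((norm (\<mu> k - m))^2 + S - (norm m)^2) / 4 + K"
  proof -
    have "(\<Sum>j\<in>UNIV. \<theta>h $ j * ((norm (\<mu> k - \<mu> j))^2 / 4 + K))
       = (\<Sum>j\<in>UNIV. \<theta>h $ j * (norm (\<mu> k - \<mu> j))^2) / 4 + K"
      using s1 by (simp add: algebra_simps sum.distrib sum_divide_distrib) (metis sum_distrib_left mult_1_right)
    also have "\<dots> = ((norm (\<mu> k - m))^2 + S - (norm m)^2) / 4 + K"
      using var_id[OF s1, of "\<mu> k" \<mu>] by (simp add: m_def mt_def S_def)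
    finally show ?thesis .
  qed
  have A: "\<xi> \<bullet> m - ss * T - (\<xi> \<bullet> \<mu> k - ss * \<tau> k) \<le> ((norm (\<mu> k - m))^2 + S - (norm m)^2) / 4 + K"
    using hs lhs rhs by simp
  have B: "(norm (\<mu> k))^2 / 2 + h k - ((norm m)^2 / 2 + L \<theta>h) \<ge> (norm (\<mu> k - m))^2 / 2"
    using key G0 by (simp add: q_def d_def)
  show ?thesis
    using A B unfolding LS h_def m_def[symmetric]
    by (simp add: power2_norm_eq_inner inner_diff_left inner_diff_right inner_add_left inner_add_right
        inner_commute algebra_simps) (simp add: field_simps)
qed

lemma opn_bound:
  fixes D :: "real^'n^'n"
  shows "norm (D *v v) \<le> op_norm D * norm v"
  unfolding op_norm_def using onorm[OF matrix_vector_mul_bounded_linear, of D v] by simp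

lemma op_norm_le:
  fixes D :: "real^'n^'n"
  assumes "\<And>v. norm (D *v v) \<le> a * norm v"
  shows "op_norm D \<le> a"
  unfolding op_norm_def using assms by (intro onorm_le) auto

lemma transp_bound:
  fixes D :: "real^'n^'n"
  assumes h: "\<And>v. norm (D *v v) \<le> a * norm v" and a: "a \<ge> 0"
  shows "norm (transpose D *v u) \<le> a * norm u"
proof -
  define w where "w = transpose D *v u"
  have "(norm w)^2 = w \<bullet> w" by (rule power2_norm_eq_inner)
  also have "\<dots> = u \<bullet> (D *v w)" unfolding w_def by (simp add: dot_lmul_matrix)
  also have "\<dots> \<le> norm u * norm (D *v w)" by (rule norm_cauchy_schwarz)
  also have "\<dots> \<le> norm u * (a * norm w)" using h by (simp add: mult_left_mono)
  finally have *: "(norm w)^2 \<le> norm u * (a * norm w)" .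
  show ?thesis
  proof (cases "norm w = 0")
    case True then show ?thesis using a by (simp add: w_def)
  next
    case False
    then have "norm w > 0" by simp
    with * have "norm w * norm w \<le> (a * norm u) * norm w" by (simp add: power2_eq_square algebra_simps)
    then show ?thesis using \<open>norm w > 0\<close> unfolding w_def[symmetric] by simp
  qed
qed

lemma inner_transp:
  fixes D :: "real^'n^'n"
  shows "x \<bullet> (transpose D *v u) = (D *v x) \<bullet> u"
  by (simp add: dot_lmul_matrix) (metis dot_lmul_matrix inner_commute)

lemma normsq_vec:
  fixes x :: "real^'n"
  shows "(norm x)^2 = (\<Sum>i\<in>UNIV. (x $ i)^2)"
  unfolding power2_norm_eq_inner by (simp add: inner_vec_def power2_eq_square)

lemma frob_sq:
  fixes B :: "real^'n^'n"
  shows "(frob_norm B)^2 = (\<Sum>j\<in>UNIV. (norm (B *v axis j 1))^2)"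
proof -
  have "(frob_norm B)^2 = (\<Sum>i\<in>UNIV. \<Sum>j\<in>UNIV. (B $ i $ j)^2)"
    unfolding frob_norm_def by (simp add: sum_nonneg)
  also have "\<dots> = (\<Sum>j\<in>UNIV. \<Sum>i\<in>UNIV. (B $ i $ j)^2)" by (rule sum.swap)
  also have "\<dots> = (\<Sum>j\<in>UNIV. (norm (B *v axis j 1))^2)"
    by (simp add: normsq_vec matrix_vector_mult_basis column_def)
  finally show ?thesis .
qed

lemma trace_tt:
  fixes D :: "real^'n^'n"
  shows "trace (transpose D ** D) = (frob_norm D)^2"
proof -
  have "trace (transpose D ** D) = (\<Sum>i\<in>UNIV. \<Sum>k\<in>UNIV. (D $ k $ i)^2)"
    by (simp add: trace_def matrix_matrix_mult_def transpose_def power2_eq_square)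
  also have "\<dots> = (\<Sum>k\<in>UNIV. \<Sum>i\<in>UNIV. (D $ k $ i)^2)" by (rule sum.swap)
  also have "\<dots> = (frob_norm D)^2" unfolding frob_norm_def by (simp add: sum_nonneg)
  finally show ?thesis .
qed

lemma Bv:
  fixes D :: "real^'n^'n"
  shows "(D - (1/4) *\<^sub>R (transpose D ** D)) *v v = D *v v - (1/4) *\<^sub>R (transpose D *v (D *v v))"
  by (simp add: matrix_vector_mult_diff_rdistrib scaleR_matrix_vector_assoc[symmetric] matrix_vector_mul_assoc)

lemma B_norm:
  fixes D :: "real^'n^'n"
  assumes h: "\<And>v. norm (D *v v) \<le> 2 * norm v"
  shows "norm ((D - (1/4) *\<^sub>R (transpose D ** D)) *v v) \<le> 3/2 * norm (D *v v)"
proof -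
  have "norm ((D - (1/4) *\<^sub>R (transpose D ** D)) *v v) \<le> norm (D *v v) + (1/4) * norm (transpose D *v (D *v v))"
    unfolding Bv using norm_triangle_ineq4 by (metis norm_scaleR abs_of_nonneg zero_le_divide_1_iff zero_le_numeral)
  also have "\<dots> \<le> norm (D *v v) + (1/4) * (2 * norm (D *v v))"
    using transp_bound[of D 2 "D *v v", OF h] by linarith
  finally show ?thesis by simp
qed

lemma B_op:
  fixes D :: "real^'n^'n"
  assumes h: "\<And>v. norm (D *v v) \<le> 2 * norm v"
  shows "op_norm (D - (1/4) *\<^sub>R (transpose D ** D)) \<le> 3"
proof (rule op_norm_le)
  fix v
  have "norm ((D - (1/4) *\<^sub>R (transpose D ** D)) *v v) \<le> 3/2 * norm (D *v v)" by (rule B_norm[OF h])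
  also have "\<dots> \<le> 3/2 * (2 * norm v)" using h[of v] by simp
  finally show "norm ((D - (1/4) *\<^sub>R (transpose D ** D)) *v v) \<le> 3 * norm v" by simp
qed

lemma B_frob:
  fixes D :: "real^'n^'n"
  assumes h: "\<And>v. norm (D *v v) \<le> 2 * norm v"
  shows "frob_norm (D - (1/4) *\<^sub>R (transpose D ** D)) \<le> 3/2 * frob_norm D"
proof -
  let ?B = "D - (1/4) *\<^sub>R (transpose D ** D)"
  have "(frob_norm ?B)^2 = (\<Sum>j\<in>UNIV. (norm (?B *v axis j 1))^2)" by (rule frob_sq)
  also have "\<dots> \<le> (\<Sum>j\<in>UNIV. (3/2 * norm (D *v axis j 1))^2)"
    by (intro sum_mono power_mono B_norm[OF h]) auto
  also have "\<dots> = (3/2)^2 * (\<Sum>j\<in>UNIV. (norm (D *v axis j 1))^2)"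
    unfolding power_mult_distrib by (rule sum_distrib_left[symmetric])
  also have "\<dots> = (3/2 * frob_norm D)^2"
    unfolding frob_sq[of D, symmetric] power_mult_distrib by (rule refl)
  finally have sq: "(frob_norm ?B)^2 \<le> (3/2 * frob_norm D)^2" .
  have "frob_norm D \<ge> 0" unfolding frob_norm_def by (simp add: sum_nonneg)
  then have "0 \<le> 3/2 * frob_norm D" by simp
  then show ?thesis using power2_le_imp_le[OF sq] by blast
qed

lemma trace_scaleR: "trace ((a::real) *\<^sub>R (M::real^'n^'n)) = a * trace M"
  by (simp add: trace_def sum_distrib_left)

lemma lin_comb:
  fixes qb TB P1 P2 Lw P3 xu uu T G xc uc R1 Z R2 ncc cc :: real
  assumes "qb - TB \<le> P1 + P2" "Lw \<le> P3" "qb = xu - uu/4" "TB = T - G/4" "Lw = xc - uc/2"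
    "P1 \<le> R1" "P2 \<le> 6*Z" "P3 \<le> R2" "R1 - G/4 \<le> 9*Z" "R2 - ncc/4 \<le> 8*Z" "cc = ncc"
  shows "xu + xc - T \<le> (uu + 2*uc + cc)/4 + 23*Z"
  using assms by (simp add: field_simps)

lemma pair_bound:
  fixes D :: "real^'n^'n" and \<xi> c :: "real^'n" and \<sigma> \<sigma>b t :: real
  defines "B \<equiv> D - (1/4) *\<^sub>R (transpose D ** D)"
  defines "w \<equiv> c - (1/2) *\<^sub>R (transpose D *v c)"
  assumes h: "\<And>v. norm (D *v v) \<le> 2 * norm v" and sig: "\<sigma> \<ge> 0" and sb: "\<sigma>b > 0" and t: "t > 0"
    and Q: "\<xi> \<bullet> (B *v \<xi>) - \<sigma>^2 * trace B \<le> 2 * \<sigma> * \<sigma>b * frob_norm B * sqrt t + 2 * \<sigma>b^2 * op_norm B * t"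
    and L: "\<xi> \<bullet> w \<le> \<sigma>b * norm w * sqrt (2 * t)"
  shows "\<xi> \<bullet> (D *v \<xi> + c) - \<sigma>^2 * trace D \<le> (norm (D *v \<xi> + c))^2 / 4 + 23 * \<sigma>b^2 * t"
proof -
  define u where "u = D *v \<xi>"
  define F where "F = frob_norm D"
  define st where "st = sqrt t"
  have st0: "st \<ge> 0" and st2: "st^2 = t" using t by (auto simp: st_def)
  have F0: "F \<ge> 0" unfolding F_def frob_norm_def by (simp add: sum_nonneg)
  have e1: "\<xi> \<bullet> (B *v \<xi>) = \<xi> \<bullet> u - (u \<bullet> u) / 4"
    unfolding B_def Bv u_def by (simp add: inner_diff_right inner_transp del: transpose_matrix_vector)
  have e2: "trace B = trace D - F^2 / 4"
    unfolding B_def F_def by (simp add: trace_sub trace_scaleR trace_tt)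
  have e3: "\<xi> \<bullet> w = \<xi> \<bullet> c - (u \<bullet> c) / 2"
    unfolding w_def u_def by (simp add: inner_diff_right inner_transp del: transpose_matrix_vector)
  have e4: "(norm (u + c))^2 = u \<bullet> u + 2 * (u \<bullet> c) + c \<bullet> c"
    by (simp add: power2_norm_eq_inner inner_add_left inner_add_right inner_commute)
  have fB: "frob_norm B \<le> 3/2 * F" unfolding B_def F_def by (rule B_frob[OF h])
  have oB: "op_norm B \<le> 3" unfolding B_def by (rule B_op[OF h])
  have nw: "norm w \<le> 2 * norm c"
  proof -
    have "norm w \<le> norm c + norm ((1/2) *\<^sub>R (transpose D *v c))" unfolding w_def by (rule norm_triangle_ineq4)
    also have "\<dots> = norm c + (1/2) * norm (transpose D *v c)" by simp
    also have "\<dots> \<le> norm c + (1/2) * (2 * norm c)" using transp_bound[of D 2 c, OF h] by (simp del: transpose_matrix_vector)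
    finally show ?thesis by simp
  qed
  have q1: "2 * \<sigma> * \<sigma>b * frob_norm B * sqrt t \<le> 2 * \<sigma> * \<sigma>b * (3/2 * F) * st"
    unfolding st_def using fB sig sb st0 by (intro mult_right_mono mult_left_mono) (auto simp: st_def)
  have q2: "2 * \<sigma>b^2 * op_norm B * t \<le> 2 * \<sigma>b^2 * 3 * t"
    using oB t by (intro mult_right_mono mult_left_mono) auto
  have l1: "\<sigma>b * norm w * sqrt (2 * t) \<le> \<sigma>b * (2 * norm c) * (sqrt 2 * st)"
  proof -
    have a: "norm w * st \<le> (2 * norm c) * st" using nw st0 by (rule mult_right_mono)
    have b: "sqrt (2 * t) = sqrt 2 * st" by (simp add: st_def real_sqrt_mult)
    have "0 \<le> \<sigma>b * sqrt 2" using sb by simp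
    from mult_left_mono[OF a this] show ?thesis unfolding b by (simp add: algebra_simps)
  qed
  have am1: "3 * \<sigma> * \<sigma>b * F * st - \<sigma>^2 * F^2 / 4 \<le> 9 * \<sigma>b^2 * t"
  proof -
    have "0 \<le> (\<sigma> * F / 2 - 3 * \<sigma>b * st)^2" by simp
    then show ?thesis unfolding st2[symmetric] by (simp add: power2_eq_square algebra_simps)
  qed
  have am2: "2 * sqrt 2 * \<sigma>b * norm c * st - (norm c)^2 / 4 \<le> 8 * \<sigma>b^2 * t"
  proof -
    have "0 \<le> (norm c / 2 - 2 * sqrt 2 * \<sigma>b * st)^2" by simp
    moreover have "sqrt 2 * sqrt 2 = (2::real)" by simp
    ultimately show ?thesis unfolding st2[symmetric]
      by (simp add: power2_eq_square algebra_simps)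
  qed
  have cc: "c \<bullet> c = (norm c)^2" by (simp add: power2_norm_eq_inner)
  show ?thesis
  proof -
    have e2': "\<sigma>^2 * trace B = \<sigma>^2 * trace D - \<sigma>^2 * F^2 / 4" unfolding e2 by (simp add: algebra_simps)
    have g: "\<xi> \<bullet> (D *v \<xi> + c) = \<xi> \<bullet> u + \<xi> \<bullet> c" by (simp add: u_def inner_add_right)
    have g2: "\<xi> \<bullet> (u + c) = \<xi> \<bullet> u + \<xi> \<bullet> c" by (simp add: inner_add_right)
    have q2': "2 * \<sigma>b^2 * op_norm B * t \<le> 6 * (\<sigma>b^2 * t)" using q2 by simp
    have q1': "2 * \<sigma> * \<sigma>b * (3 / 2 * F) * st = 3 * \<sigma> * \<sigma>b * F * st" by simp
    have l1': "\<sigma>b * (2 * norm c) * (sqrt 2 * st) = 2 * sqrt 2 * \<sigma>b * norm c * st" by simp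
    have q1'': "2 * \<sigma> * \<sigma>b * frob_norm B * sqrt t \<le> 3 * \<sigma> * \<sigma>b * F * st" using q1 q1' by linarith
    have l1'': "\<sigma>b * norm w * sqrt (2 * t) \<le> 2 * sqrt 2 * \<sigma>b * norm c * st" using l1 l1' by linarith
    have am1': "3 * \<sigma> * \<sigma>b * F * st - \<sigma>^2 * F^2 / 4 \<le> 9 * (\<sigma>b^2 * t)" using am1 by (simp add: mult.assoc)
    have am2': "2 * sqrt 2 * \<sigma>b * norm c * st - (norm c)^2 / 4 \<le> 8 * (\<sigma>b^2 * t)" using am2 by (simp add: mult.assoc)
    have "\<xi> \<bullet> u + \<xi> \<bullet> c - \<sigma>^2 * trace D \<le> (u \<bullet> u + 2 * (u \<bullet> c) + c \<bullet> c) / 4 + 23 * (\<sigma>b^2 * t)"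
      by (rule lin_comb[OF Q L e1 e2' e3 q1'' q2' l1'' am1' am2' cc])
    then show ?thesis unfolding u_def[symmetric] e4 g2 by (simp add: mult.assoc)
  qed
qed

lemma mat_sum_mult:
  fixes A :: "'m \<Rightarrow> real^'n^'n"
  shows "(\<Sum>j\<in>S. c j *\<^sub>R A j) *v y = (\<Sum>j\<in>S. c j *\<^sub>R (A j *v y))"
  by (induct S rule: infinite_finite_induct)
     (simp_all add: matrix_vector_mult_add_rdistrib scaleR_matrix_vector_assoc)

lemma trace_sum:
  fixes A :: "'m \<Rightarrow> real^'n^'n"
  shows "trace (\<Sum>j\<in>S. c j *\<^sub>R A j) = (\<Sum>j\<in>S. c j * trace (A j))"
  by (induct S rule: infinite_finite_induct)
     (simp_all add: trace_add trace_scaleR trace_def sum.distrib sum_distrib_left)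

lemma mu_th_eq: "mu_th A b y \<theta> = (\<Sum>j\<in>UNIV. \<theta> $ j *\<^sub>R mu_j A b y j)"
  unfolding mu_th_def A_th_def b_th_def mu_j_def
  by (simp add: mat_sum_mult scaleR_add_right sum.distrib)

lemma Hpen_eq:
  "H_pen \<sigma> A b y \<theta> = (norm (\<Sum>j\<in>UNIV. \<theta> $ j *\<^sub>R mu_j A b y j))^2
      - 2 * (y \<bullet> (\<Sum>j\<in>UNIV. \<theta> $ j *\<^sub>R mu_j A b y j))
      + 2 * \<sigma>^2 * (\<Sum>j\<in>UNIV. \<theta> $ j * trace (A j))
      + (\<Sum>j\<in>UNIV. \<theta> $ j * (norm ((\<Sum>j\<in>UNIV. \<theta> $ j *\<^sub>R mu_j A b y j) - mu_j A b y j))^2) / 2"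
  unfolding H_pen_def Cp_def pen_def mu_th_eq A_th_def trace_sum by simp

lemma xi_meas:
  fixes \<xi> :: "'w \<Rightarrow> real^'n"
  assumes "\<And>i. (\<lambda>\<omega>. \<xi> \<omega> $ i) \<in> borel_measurable P"
  shows "\<xi> \<in> borel_measurable P"
proof (rule borel_measurable_euclidean_space[THEN iffD2], rule ballI)
  fix i :: "real^'n" assume "i \<in> Basis"
  then obtain j where "i = axis j 1" using axis_inverse by blast
  then show "(\<lambda>x. \<xi> x \<bullet> i) \<in> borel_measurable P" using assms[of j] by (simp add: inner_axis)
qed

lemma set_meas:
  fixes g :: "'w \<Rightarrow> real"
  assumes "g \<in> borel_measurable P"
  shows "{\<omega> \<in> space P. g \<omega> > a} \<in> sets P"
  using assms unfolding borel_measurable_iff_greater by blast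

lemma exp_t:
  fixes x M :: real
  assumes "M > 0"
  shows "M^2 * exp (- (x + 2 * ln M)) = exp (- x)"
proof -
  have "exp (2 * ln M) = exp (ln M + ln M)" by (simp only: mult_2)
  also have "\<dots> = exp (ln M) * exp (ln M)" by (rule exp_add)
  also have "\<dots> = M^2" using assms by (simp add: power2_eq_square)
  finally have e: "exp (2 * ln M) = M^2" .
  have "exp (- (x + 2 * ln M)) * exp (2 * ln M) = exp (- (x + 2 * ln M) + 2 * ln M)" by (rule exp_add[symmetric])
  also have "\<dots> = exp (- x)" by simp
  finally show ?thesis unfolding e by (simp add: mult.commute)
qed

theorem theorem6p1:
  fixes P :: "'w measure"
    and \<xi> :: "'w \<Rightarrow> real^'n"
    and f :: "real^'n"
    and A :: "'m::finite \<Rightarrow> real^'n^'n"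
    and b :: "'m \<Rightarrow> real^'n"
    and \<sigma> \<sigma>bar :: real
    and \<theta>hat :: "'w \<Rightarrow> real^'m"
  assumes "prob_space P"
    and M2: "CARD('m) \<ge> 2"
    and sbar: "\<sigma>bar > 0"
    and sig: "\<sigma> \<ge> 0"
    and meas: "\<And>i. (\<lambda>\<omega>. \<xi> \<omega> $ i) \<in> borel_measurable P"
    and indep: "prob_space.indep_vars P (\<lambda>_. borel) (\<lambda>i \<omega>. \<xi> \<omega> $ i) UNIV"
    and ident: "\<And>i k. distr P borel (\<lambda>\<omega>. \<xi> \<omega> $ i) = distr P borel (\<lambda>\<omega>. \<xi> \<omega> $ k)"
    and sq_int: "\<And>i. integrable P (\<lambda>\<omega>. (\<xi> \<omega> $ i)^2)"
    and centered: "\<And>i. prob_space.expectation P (\<lambda>\<omega>. \<xi> \<omega> $ i) = 0"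
    and variance: "\<And>i. prob_space.variance P (\<lambda>\<omega>. \<xi> \<omega> $ i) = \<sigma>^2"
    and lin_tail: "\<And>(bv::real^'n) x. x > 0 \<Longrightarrow>
        measure P {\<omega> \<in> space P. \<xi> \<omega> \<bullet> bv > \<sigma>bar * norm bv * sqrt (2 * x)} \<le> exp (- x)"
    and quad_tail: "\<And>(B::real^'n^'n) x. x > 0 \<Longrightarrow>
        measure P {\<omega> \<in> space P. \<xi> \<omega> \<bullet> (B *v \<xi> \<omega>) - \<sigma>^2 * trace B
           > 2 * \<sigma> * \<sigma>bar * frob_norm B * sqrt x + 2 * \<sigma>bar^2 * op_norm B * x} \<le> exp (- x)"
    and opA: "\<And>j. op_norm (A j) \<le> 1"
    and thetamin: "\<And>\<omega>. \<omega> \<in> space P \<Longrightarrow> \<theta>hat \<omega> \<in> simplexM \<and>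
        (\<forall>\<theta>\<in>simplexM. H_pen \<sigma> A b (f + \<xi> \<omega>) (\<theta>hat \<omega>) \<le> H_pen \<sigma> A b (f + \<xi> \<omega>) \<theta>)"
    and x: "x > 0"
  shows "\<exists>E \<in> sets P. measure P E \<ge> 1 - 2 * exp (- x) \<and>
     (\<forall>\<omega>\<in>E. (norm (mu_th A b (f + \<xi> \<omega>) (\<theta>hat \<omega>) - f))^2
        \<le> (MIN j. (norm (mu_j A b (f + \<xi> \<omega>) j - f))^2)
           + 46 * \<sigma>bar^2 * (2 * ln (real CARD('m)) + x))"
proof -
  interpret P: prob_space P by fact
  define M where "M = real CARD('m)"
  have Mge: "M \<ge> 2" using M2 unfolding M_def by simp
  define t where "t = x + 2 * ln M"
  have lnM: "ln M > 0" using Mge by (intro ln_gt_zero) simp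
  have t0: "t > 0" using x lnM unfolding t_def by simp
  define D where "D p = A (fst p) - A (snd p)" for p :: "'m \<times> 'm"
  define c where "c p = D p *v f + b (fst p) - b (snd p)" for p
  define B where "B p = D p - (1/4) *\<^sub>R (transpose (D p) ** D p)" for p
  define w where "w p = c p - (1/2) *\<^sub>R (transpose (D p) *v c p)" for p
  define QB where "QB p = {\<omega> \<in> space P. \<xi> \<omega> \<bullet> (B p *v \<xi> \<omega>) - \<sigma>^2 * trace (B p)
           > 2 * \<sigma> * \<sigma>bar * frob_norm (B p) * sqrt t + 2 * \<sigma>bar^2 * op_norm (B p) * t}" for p
  define LB where "LB p = {\<omega> \<in> space P. \<xi> \<omega> \<bullet> w p > \<sigma>bar * norm (w p) * sqrt (2 * t)}" for p
  define bad where "bad = (\<Union>p\<in>UNIV. QB p \<union> LB p)"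
  define E where "E = space P - bad"
  have xim: "\<xi> \<in> borel_measurable P" by (rule xi_meas[OF meas])
  have QBs: "QB p \<in> sets P" for p
  proof -
    have bm: "(\<lambda>\<omega>. B p *v \<xi> \<omega>) \<in> borel_measurable P"
      using borel_measurable_continuous_on[OF linear_continuous_on[OF matrix_vector_mul_bounded_linear] xim] .
    have "(\<lambda>\<omega>. \<xi> \<omega> \<bullet> (B p *v \<xi> \<omega>) - \<sigma>^2 * trace (B p)) \<in> borel_measurable P"
      using borel_measurable_inner[OF xim bm] by simp
    then show ?thesis unfolding QB_def by (rule set_meas)
  qed
  have LBs: "LB p \<in> sets P" for p
  proof -
    have "(\<lambda>\<omega>. \<xi> \<omega> \<bullet> w p) \<in> borel_measurable P"
      using borel_measurable_inner[OF xim borel_measurable_const] by simp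
    then show ?thesis unfolding LB_def by (rule set_meas)
  qed
  have bads: "bad \<in> sets P" unfolding bad_def using QBs LBs by auto
  have Es: "E \<in> sets P" unfolding E_def using bads by auto
  have mQ: "measure P (QB p) \<le> exp (- t)" for p
    unfolding QB_def using quad_tail[OF t0, of "B p"] .
  have mL: "measure P (LB p) \<le> exp (- t)" for p
    unfolding LB_def using lin_tail[OF t0, of "w p"] .
  have "measure P bad \<le> (\<Sum>p\<in>UNIV. measure P (QB p \<union> LB p))"
    unfolding bad_def by (rule measure_UNION_le) (use QBs LBs in auto)
  also have "\<dots> \<le> (\<Sum>p\<in>(UNIV::('m \<times> 'm) set). 2 * exp (- t))"
  proof (rule sum_mono)
    fix p :: "'m \<times> 'm"
    have "measure P (QB p \<union> LB p) \<le> measure P (QB p) + measure P (LB p)"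
      by (rule measure_Un_le) (use QBs LBs in auto)
    then show "measure P (QB p \<union> LB p) \<le> 2 * exp (- t)" using mQ[of p] mL[of p] by linarith
  qed
  also have "\<dots> = 2 * (M^2 * exp (- t))"
    by (simp add: M_def power2_eq_square)
  also have "\<dots> = 2 * exp (- x)"
    unfolding t_def using exp_t[of M x] Mge by simp
  finally have mbad: "measure P bad \<le> 2 * exp (- x)" .
  have mE: "measure P E \<ge> 1 - 2 * exp (- x)"
    unfolding E_def using P.prob_compl[OF bads] mbad by simp
  have main: "(norm (mu_th A b (f + \<xi> \<omega>) (\<theta>hat \<omega>) - f))^2
        \<le> (MIN j. (norm (mu_j A b (f + \<xi> \<omega>) j - f))^2)
           + 46 * \<sigma>bar^2 * (2 * ln (real CARD('m)) + x)" if \<omega>E: "\<omega> \<in> E" for \<omega>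
  proof -
    have \<omega>s: "\<omega> \<in> space P" using \<omega>E unfolding E_def by auto
    have nQ: "\<omega> \<notin> QB p" and nL: "\<omega> \<notin> LB p" for p using \<omega>E unfolding E_def bad_def by blast+
    define y where "y = f + \<xi> \<omega>"
    define \<mu> where "\<mu> = mu_j A b y"
    define g where "g j = (norm (\<mu> j - f))^2" for j
    have "Min (range g) \<in> range g" by (rule Min_in) auto
    then obtain k where gk: "g k = Min (range g)" by (metis rangeE)
    have hyp: "\<forall>j. (\<xi> \<omega> \<bullet> \<mu> j - \<sigma>^2 * trace (A j)) - (\<xi> \<omega> \<bullet> \<mu> k - \<sigma>^2 * trace (A k))
        \<le> (norm (\<mu> j - \<mu> k))^2 / 4 + 23 * \<sigma>bar^2 * t"
    proof
      fix j :: 'm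
      let ?p = "(j, k)"
      have h: "norm (D ?p *v v) \<le> 2 * norm v" for v
      proof -
        have "norm (D ?p *v v) = norm (A j *v v - A k *v v)"
          by (simp add: D_def matrix_vector_mult_diff_rdistrib)
        also have "\<dots> \<le> norm (A j *v v) + norm (A k *v v)" by (rule norm_triangle_ineq4)
        also have "\<dots> \<le> op_norm (A j) * norm v + op_norm (A k) * norm v"
          using opn_bound[of "A j" v] opn_bound[of "A k" v] by linarith
        also have "\<dots> \<le> 1 * norm v + 1 * norm v"
          using opA[of j] opA[of k] by (intro add_mono mult_right_mono) auto
        finally show ?thesis by simp
      qed
      have Q: "\<xi> \<omega> \<bullet> (B ?p *v \<xi> \<omega>) - \<sigma>^2 * trace (B ?p)
           \<le> 2 * \<sigma> * \<sigma>bar * frob_norm (B ?p) * sqrt t + 2 * \<sigma>bar^2 * op_norm (B ?p) * t"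
        using nQ[of ?p] \<omega>s unfolding QB_def by auto
      have L: "\<xi> \<omega> \<bullet> w ?p \<le> \<sigma>bar * norm (w ?p) * sqrt (2 * t)"
        using nL[of ?p] \<omega>s unfolding LB_def by auto
      have pb: "\<xi> \<omega> \<bullet> (D ?p *v \<xi> \<omega> + c ?p) - \<sigma>^2 * trace (D ?p)
          \<le> (norm (D ?p *v \<xi> \<omega> + c ?p))^2 / 4 + 23 * \<sigma>bar^2 * t"
        using pair_bound[OF h sig sbar t0, of "\<xi> \<omega>" "c ?p"] Q L unfolding B_def w_def by blast
      have e1: "D ?p *v \<xi> \<omega> + c ?p = \<mu> j - \<mu> k"
        unfolding \<mu>_def mu_j_def c_def D_def y_def
        by (simp add: matrix_vector_mult_diff_rdistrib matrix_vector_right_distrib algebra_simps)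
      have e2: "trace (D ?p) = trace (A j) - trace (A k)" by (simp add: D_def trace_sub)
      show "(\<xi> \<omega> \<bullet> \<mu> j - \<sigma>^2 * trace (A j)) - (\<xi> \<omega> \<bullet> \<mu> k - \<sigma>^2 * trace (A k))
        \<le> (norm (\<mu> j - \<mu> k))^2 / 4 + 23 * \<sigma>bar^2 * t"
        using pb unfolding e1 e2 by (simp add: inner_diff_right algebra_simps)
    qed
    have th: "\<theta>hat \<omega> \<in> simplexM" using thetamin[OF \<omega>s] by simp
    have minH: "\<forall>\<theta>\<in>simplexM. H_pen \<sigma> A b y (\<theta>hat \<omega>) \<le> H_pen \<sigma> A b y \<theta>"
      using thetamin[OF \<omega>s] unfolding y_def by simp
    have det_res: "(norm ((\<Sum>j\<in>UNIV. \<theta>hat \<omega> $ j *\<^sub>R \<mu> j) - f))^2 \<le> (norm (\<mu> k - f))^2 + 2 * (23 * \<sigma>bar^2 * t)"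
      apply (rule det[where \<tau> = "\<lambda>j. trace (A j)" and \<xi> = "\<xi> \<omega>" and ss = "\<sigma>^2"])
        apply (rule th)
      using minH hyp unfolding Hpen_eq y_def \<mu>_def by simp_all
    have "(norm (mu_th A b (f + \<xi> \<omega>) (\<theta>hat \<omega>) - f))^2 \<le> g k + 46 * \<sigma>bar^2 * t"
      using det_res unfolding mu_th_eq g_def \<mu>_def y_def by simp
    moreover have "(MIN j. (norm (mu_j A b (f + \<xi> \<omega>) j - f))^2) = g k"
    proof -
      have "(MIN j. (norm (mu_j A b (f + \<xi> \<omega>) j - f))^2) = Min (range g)"
        unfolding g_def \<mu>_def y_def by simp
      then show ?thesis using gk by simp
    qed
    moreover have "t = 2 * ln (real CARD('m)) + x" unfolding t_def M_def by simp
    ultimately show ?thesis by simp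
  qed
  show ?thesis using Es mE main by blast
qed

end
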